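(* Let $n\ge 2$ be an integer and let $$ P(x)=x^{2n}+ d_{2n-1} x^{2n-1}+\dots + d_1 x +1 $$ with real coefficients $d_i$ satisfying $d_{2n-i}=d_i$ for $i=1,\dots,2n-1$ and $|d_i|<1/(2n-2)$ for all $i$. Then all roots of $P$ lie on the unit circle. *)

theory Defs
  imports "HOL-Analysis.Analysis"
begin

end

theory Submission
  imports Defs
begin

theorem lemma3:
  fixes n :: nat and d :: "nat \<Rightarrow> real" and z :: complex
  assumes "n \<ge> 2"
    and "\<And>i. 1 \<le> i \<Longrightarrow> i \<le> 2*n - 1 \<Longrightarrow> d (2*n - i) = d i"
    and "\<And>i. 1 \<le> i \<Longrightarrow> i \<le> 2*n - 1 \<Longrightarrow> \<bar>d i\<bar> < 1 / (2 * real n - 2)"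
    and "z ^ (2*n) + (\<Sum>i=1..2*n-1. complex_of_real (d i) * z ^ i) + 1 = 0"
  shows "cmod z = 1"
proof -
  note n2 = assms(1) and sym = assms(2) and bnd = assms(3) and root = assms(4)
  define c :: "nat \<Rightarrow> real" where "c i = (if i = 0 \<or> i = 2*n then 1 else d i)" for i
  define g :: "real \<Rightarrow> real" where "g t = (\<Sum>i\<le>2*n. c i * cos ((real i - real n) * t))" for t
  define F :: "complex \<Rightarrow> complex" where "F w = (\<Sum>i\<le>2*n. complex_of_real (c i) * w ^ i)" for w
  have csym: "c (2*n - i) = c i" if "i \<le> 2*n" for i
    using sym[of i] that n2 by (auto simp: c_def)
  have split: "(\<Sum>i\<le>2*n. h i) = h 0 + h (2*n) + (\<Sum>i=1..2*n-1. h i)" for h :: "nat \<Rightarrow> 'a::comm_monoid_add"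
  proof -
    have e: "{..2*n} = insert 0 (insert (2*n) {1..2*n-1})" using n2 by auto
    show ?thesis unfolding e using n2 by (simp add: add.assoc)
  qed
  have mid: "(\<Sum>i=1..2*n-1. complex_of_real (c i) * z ^ i) = (\<Sum>i=1..2*n-1. complex_of_real (d i) * z ^ i)"
    by (rule sum.cong) (auto simp: c_def)
  have Fz: "F z = 0"
    using root unfolding F_def split mid by (simp add: c_def add_ac)
  have sinsum: "(\<Sum>i\<le>2*n. c i * sin ((real i - real n) * t)) = 0" for t
  proof -
    let ?S = "(\<Sum>i\<le>2*n. c i * sin ((real i - real n) * t))"
    have "?S = (\<Sum>i=0..2*n. c i * sin ((real i - real n) * t))"
      by (simp add: atMost_atLeast0)
    also have "\<dots> = (\<Sum>i=0..2*n. c (2*n - i) * sin ((real (2*n - i) - real n) * t))"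
      by (subst sum.atLeastAtMost_rev) simp
    also have "\<dots> = (\<Sum>i=0..2*n. - (c i * sin ((real i - real n) * t)))"
    proof (rule sum.cong)
      fix i assume "i \<in> {0..2*n}"
      then have i: "i \<le> 2*n" by simp
      have "real (2*n - i) - real n = - (real i - real n)" using i by (simp add: of_nat_diff)
      moreover have "sin ((real n - real i) * t) = - sin ((real i - real n) * t)"
        by (metis minus_diff_eq mult_minus_left sin_minus)
      ultimately show "c (2*n - i) * sin ((real (2*n - i) - real n) * t) = - (c i * sin ((real i - real n) * t))"
        using csym[OF i] by simp
    qed simp
    also have "\<dots> = - ?S" by (simp add: sum_negf atMost_atLeast0)
    finally show ?thesis by simp
  qed
  have Fcis: "F (cis t) = cis (real n * t) * complex_of_real (g t)" for t
  proof -
    have "F (cis t) = (\<Sum>i\<le>2*n. cis (real n * t) * (complex_of_real (c i) * cis ((real i - real n) * t)))"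
      unfolding F_def
    proof (rule sum.cong)
      fix i
      have "cis (real n * t) * cis ((real i - real n) * t) = cis (real i * t)"
        by (simp add: cis_mult algebra_simps)
      then show "complex_of_real (c i) * cis t ^ i = cis (real n * t) * (complex_of_real (c i) * cis ((real i - real n) * t))"
        using Complex.DeMoivre[of t i] by (simp add: mult_ac)
    qed simp
    also have "\<dots> = cis (real n * t) * (\<Sum>i\<le>2*n. complex_of_real (c i) * cis ((real i - real n) * t))"
      by (simp add: sum_distrib_left)
    also have "(\<Sum>i\<le>2*n. complex_of_real (c i) * cis ((real i - real n) * t))
       = complex_of_real (g t) + \<i> * complex_of_real (\<Sum>i\<le>2*n. c i * sin ((real i - real n) * t))"
    proof -
      have "(\<Sum>i\<le>2*n. complex_of_real (c i) * cis ((real i - real n) * t))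
          = (\<Sum>i\<le>2*n. complex_of_real (c i * cos ((real i - real n) * t)) + \<i> * complex_of_real (c i * sin ((real i - real n) * t)))"
        by (rule sum.cong) (simp_all add: cis.ctr Complex_eq algebra_simps)
      then show ?thesis unfolding g_def by (simp add: sum.distrib sum_distrib_left)
    qed
    finally show ?thesis using sinsum by simp
  qed
  have npos: "real n > 0" using n2 by simp
  have gk: "(-1)^k * g (real k * pi / real n) > 0" for k :: nat
  proof -
    let ?x = "real k * pi / real n"
    define R where "R = (\<Sum>i=1..2*n-1. c i * cos ((real i - real n) * ?x))"
    have e0: "(real 0 - real n) * ?x = - (real k * pi)" using npos by (simp add: field_simps)
    have e1: "(real (2*n) - real n) * ?x = real k * pi" using npos by (simp add: field_simps)
    have gx: "g ?x = 2 * (-1)^k + R"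
      unfolding g_def split R_def
      by (simp only: e0 e1 cos_minus cos_npi) (simp add: c_def)
    have "\<bar>R\<bar> \<le> (\<Sum>i=1..2*n-1. \<bar>c i * cos ((real i - real n) * ?x)\<bar>)"
      unfolding R_def by (rule sum_abs)
    also have "\<dots> \<le> (\<Sum>i=1..2*n-1. \<bar>c i\<bar>)"
      by (rule sum_mono) (simp add: abs_mult mult_left_le)
    also have "\<dots> < (\<Sum>i=1..2*n-1. 1 / (2 * real n - 2))"
    proof (rule sum_strict_mono)
      show "{1..2*n-1} \<noteq> {}" using n2 by auto
      fix i assume "i \<in> {1..2*n-1}"
      then show "\<bar>c i\<bar> < 1 / (2 * real n - 2)" using bnd[of i] by (auto simp: c_def)
    qed simp
    also have "\<dots> = real (2*n-1) / (2 * real n - 2)" by simp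
    also have "\<dots> \<le> 3/2"
    proof -
      have "2 * real n - 2 > 0" using n2 by simp
      moreover have "real (2*n-1) = 2 * real n - 1" using n2 by (simp add: of_nat_diff)
      ultimately show ?thesis using n2 by (simp add: divide_le_eq)
    qed
    finally have Rb: "\<bar>R\<bar> < 3/2" .
    have "(-1)^k * g ?x = 2 + (-1)^k * R"
      unfolding gx by (simp add: algebra_simps)
    moreover have "\<bar>(-1)^k * R\<bar> = \<bar>R\<bar>" by (simp add: abs_mult)
    ultimately show ?thesis using Rb by linarith
  qed
  have gcont: "continuous_on S g" for S
    unfolding g_def by (intro continuous_intros)
  have ivt: "\<exists>x. a < x \<and> x < b \<and> g x = 0" if "a < b" "g a * g b < 0" for a b
  proof -
    have ne: "g a \<noteq> 0" "g b \<noteq> 0" using that(2) by auto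
    have "\<exists>x. a \<le> x \<and> x \<le> b \<and> g x = 0"
    proof (cases "g a < 0")
      case True
      then have "g b > 0" using that(2) by (simp add: mult_less_0_iff)
      then show ?thesis using IVT'[of g a 0 b] True that(1) gcont by auto
    next
      case False
      then have "g a > 0" "g b < 0" using that(2) ne by (auto simp: mult_less_0_iff)
      then show ?thesis using IVT2'[of g b 0 a] that(1) gcont by auto
    qed
    then show ?thesis using ne by (metis order.order_iff_strict)
  qed
  have "\<forall>k. \<exists>x. real k * pi / real n < x \<and> x < real (Suc k) * pi / real n \<and> g x = 0"
  proof
    fix k
    have lt: "real k * pi / real n < real (Suc k) * pi / real n"
      using npos by (simp add: divide_strict_right_mono)
    have "0 < ((-1)^k * g (real k * pi / real n)) * ((-1)^(Suc k) * g (real (Suc k) * pi / real n))"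
      using gk[of k] gk[of "Suc k"] by (rule mult_pos_pos)
    also have "\<dots> = - (g (real k * pi / real n) * g (real (Suc k) * pi / real n))"
      by (simp add: algebra_simps)
    finally show "\<exists>x. real k * pi / real n < x \<and> x < real (Suc k) * pi / real n \<and> g x = 0"
      using ivt[OF lt] by simp
  qed
  then obtain t where t: "\<And>k. real k * pi / real n < t k \<and> t k < real (Suc k) * pi / real n \<and> g (t k) = 0"
    by metis
  have troot: "F (cis (t k)) = 0" for k using Fcis[of "t k"] t[of k] by simp
  have tlt: "0 < t b - t a \<and> t b - t a < 2 * pi" if "a < b" "b < 2*n" for a b
  proof -
    have "real (Suc a) * pi / real n \<le> real b * pi / real n"
      using that npos by (intro divide_right_mono mult_right_mono) auto
    moreover have "real (Suc b) * pi / real n \<le> real (2*n) * pi / real n"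
      using that npos by (intro divide_right_mono mult_right_mono) auto
    moreover have "real (2*n) * pi / real n = 2 * pi" using npos by simp
    moreover have "0 \<le> real a * pi / real n" by simp
    ultimately show ?thesis using t[of a] t[of b] by linarith
  qed
  have neq: "cis (t a) \<noteq> cis (t b)" if "a < b" "b < 2*n" for a b
  proof
    assume eq: "cis (t a) = cis (t b)"
    have "cis (t b - t a) = cis (t b) / cis (t a)" by (simp add: cis_divide)
    also have "\<dots> = 1" using eq by simp
    finally have "cos (t b - t a) = 1" by (metis cis.sel(1) one_complex.sel(1))
    then obtain m :: int where m: "t b - t a = real_of_int m * (2 * pi)" using cos_one_2pi_int by (metis mult.assoc)
    have "0 < real_of_int m * (2*pi)" "real_of_int m * (2*pi) < 1 * (2*pi)" using tlt[OF that] m by auto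
    then have "0 < m" "m < 1" by (simp_all add: zero_less_mult_iff)
    then show False by simp
  qed
  have inj: "inj_on (\<lambda>k. cis (t k)) {..<2*n}"
  proof (rule inj_onI)
    fix a b assume ab: "a \<in> {..<2*n}" "b \<in> {..<2*n}" "cis (t a) = cis (t b)"
    show "a = b"
    proof (rule ccontr)
      assume "a \<noteq> b"
      then have "a < b \<or> b < a" by arith
      then show False using neq ab by (metis lessThan_iff)
    qed
  qed
  define T where "T = (\<lambda>k. cis (t k)) ` {..<2*n}"
  define S where "S = {w. (\<Sum>i\<le>2*n. complex_of_real (c i) * w ^ i) = 0}"
  have c2n: "complex_of_real (c (2*n)) \<noteq> 0" by (simp add: c_def)
  have Sfin: "finite S" unfolding S_def by (rule polyfun_roots_finite[where c="\<lambda>i. complex_of_real (c i)" and k="2*n", OF c2n]) simp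
  have Scard: "card S \<le> 2*n" unfolding S_def by (rule polyfun_roots_card[where c="\<lambda>i. complex_of_real (c i)" and k="2*n", OF c2n]) simp
  have TS: "T \<subseteq> S" using troot unfolding T_def S_def F_def by auto
  have Tcard: "card T = 2*n" unfolding T_def using card_image[OF inj] by simp
  have zS: "z \<in> S" using Fz unfolding S_def F_def by simp
  have "z \<in> T"
  proof (rule ccontr)
    assume "z \<notin> T"
    then have "card (insert z T) = 2*n + 1" using Tcard TS Sfin finite_subset by fastforce
    moreover have "card (insert z T) \<le> card S" using TS zS Sfin by (intro card_mono) auto
    ultimately show False using Scard by simp
  qed
  then show ?thesis unfolding T_def by auto
qed

end
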